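(* Let $(X,Y)\sim P_{X,Y}$ be random variables in $\{0,1\}\times\mathcal{Y}$, $\mathcal{Y}=\{1,\dots,|\mathcal{Y}|\}$ with $|\mathcal{Y}|\geq 3$, let $p_y=\mathbb{P}(X=0|Y=y)$ and assume $p_1\le\cdots\le p_{|\mathcal{Y}|}$. For $i\in\{2,\dots,|\mathcal{Y}|-1\}$ let $\alpha_i\in[0,1]$ satisfy $\alpha_ip_{i-1}+(1-\alpha_i)p_{i+1}=p_i$ and define $P^i_{Y,Z,X}=P_YP^i_{Z|Y}P^i_{X|Z}$ on $\mathcal{Y}\times(\mathcal{Y}\setminus\{i\})\times\{0,1\}$ by $P^i_{Z|Y}(z|y)=1$ if $y\neq i,z=y$; $=\alpha_i$ if $y=i,z=i-1$; $=1-\alpha_i$ if $y=i,z=i+1$; $=0$ otherwise; and $P^i_{X|Z}(0|z)=p_z$. Then there exists $i\in\{2,\dots,|\mathcal{Y}|-1\}$ such that under $P^i_{Y,Z,X}$, \[ I(X;Z)-I(X;Y)\leq\frac{256}{|\mathcal{Y}|^3}. \]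
   Context: Logarithms (and mutual informations) are natural. *)

theory Defs
  imports Complex_Main
begin

definition mutual_info :: "'a set \<Rightarrow> 'b set \<Rightarrow> ('a \<Rightarrow> 'b \<Rightarrow> real) \<Rightarrow> real" where
  "mutual_info A B J =
     (\<Sum>a\<in>A. \<Sum>b\<in>B.
        if J a b = 0 then 0
        else J a b * ln (J a b / ((\<Sum>b'\<in>B. J a b') * (\<Sum>a'\<in>A. J a' b))))"

definition kernelZ :: "(nat \<Rightarrow> real) \<Rightarrow> nat \<Rightarrow> nat \<Rightarrow> nat \<Rightarrow> real" where
  "kernelZ \<alpha> i y z =
     (if y \<noteq> i \<and> z = y then 1
      else if y = i \<and> z = i - 1 then \<alpha> i
      else if y = i \<and> z = i + 1 then 1 - \<alpha> i
      else 0)"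

definition kernelX :: "(nat \<Rightarrow> real) \<Rightarrow> nat \<Rightarrow> nat \<Rightarrow> real" where
  "kernelX p z x = (if x = 0 then p z else 1 - p z)"

definition PYZX :: "(nat \<Rightarrow> real) \<Rightarrow> (nat \<Rightarrow> real) \<Rightarrow> (nat \<Rightarrow> real) \<Rightarrow> nat \<Rightarrow> nat \<Rightarrow> nat \<Rightarrow> nat \<Rightarrow> real" where
  "PYZX q p \<alpha> i y z x = q y * kernelZ \<alpha> i y z * kernelX p z x"

definition PXZ :: "nat \<Rightarrow> (nat \<Rightarrow> real) \<Rightarrow> (nat \<Rightarrow> real) \<Rightarrow> (nat \<Rightarrow> real) \<Rightarrow> nat \<Rightarrow> nat \<Rightarrow> nat \<Rightarrow> real" where
  "PXZ n q p \<alpha> i x z = (\<Sum>y\<in>{1..n}. PYZX q p \<alpha> i y z x)"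

definition PXY :: "nat \<Rightarrow> (nat \<Rightarrow> real) \<Rightarrow> (nat \<Rightarrow> real) \<Rightarrow> (nat \<Rightarrow> real) \<Rightarrow> nat \<Rightarrow> nat \<Rightarrow> nat \<Rightarrow> real" where
  "PXY n q p \<alpha> i x y = (\<Sum>z\<in>{1..n} - {i}. PYZX q p \<alpha> i y z x)"

end

theory Submission
  imports Defs
begin

definition negent :: "real \<Rightarrow> real" where
  "negent x = x * ln x + (1 - x) * ln (1 - x)"

lemma xlnx_le:
  assumes "0 \<le> (x::real)" "0 < m"
  shows "x * ln x - x * ln m \<le> x * (x - m) / m"
proof (cases "x = 0")
  case True then show ?thesis by simp
next
  case False
  then have xp: "x > 0" using assms by simp
  have "ln (x/m) \<le> x/m - 1" by (rule ln_le_minus_one) (use xp assms in simp)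
  then have "ln x - ln m \<le> x/m - 1" using xp assms by (simp add: ln_div)
  then have "x * (ln x - ln m) \<le> x * (x/m - 1)" using xp by (simp add: mult_left_mono)
  also have "x * (x/m - 1) = x * (x - m) / m" using assms by (simp add: field_simps)
  finally show ?thesis by (simp add: algebra_simps)
qed

lemma K_le:
  assumes "0 \<le> x" "x \<le> 1" "0 < m" "m < 1"
  shows "negent x - (x * ln m + (1 - x) * ln (1 - m)) \<le> (x - m)^2 / (m * (1 - m))"
proof -
  have "negent x - (x * ln m + (1 - x) * ln (1 - m))
      = (x * ln x - x * ln m) + ((1-x) * ln (1-x) - (1-x) * ln (1-m))"
    by (simp add: negent_def algebra_simps)
  also have "\<dots> \<le> x * (x - m) / m + (1-x) * ((1-x) - (1-m)) / (1-m)"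
    using xlnx_le[of x m] xlnx_le[of "1-x" "1-m"] assms by (intro add_mono) auto
  also have "\<dots> = (x - m)^2 / (m * (1 - m))"
    using assms by (simp add: field_simps power2_eq_square)
  finally show ?thesis .
qed

lemma gap_chi:
  assumes "0 \<le> a" "a \<le> m" "m \<le> b" "b \<le> 1" "0 \<le> al" "al \<le> 1" "al * a + (1 - al) * b = m"
    "0 < m" "m < 1"
  shows "al * negent a + (1 - al) * negent b - negent m \<le> (m - a) * (b - m) / (m * (1 - m))"
proof -
  let ?L = "\<lambda>x. x * ln m + (1 - x) * ln (1 - m)"
  have e0: "al * ?L a + (1 - al) * ?L b = (al * a + (1 - al) * b) * ln m + (1 - (al * a + (1 - al) * b)) * ln (1 - m)"
    by (simp add: algebra_simps)
  have e: "al * ?L a + (1 - al) * ?L b = negent m"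
    unfolding e0 assms(7) negent_def by simp
  have "al * negent a + (1 - al) * negent b - negent m
      = al * (negent a - ?L a) + (1 - al) * (negent b - ?L b)"
    using e by (simp add: algebra_simps)
  also have "\<dots> \<le> al * ((a - m)^2 / (m * (1 - m))) + (1 - al) * ((b - m)^2 / (m * (1 - m)))"
    using K_le[of a m] K_le[of b m] assms by (intro add_mono mult_left_mono) auto
  also have "\<dots> = (al * (a - m)^2 + (1 - al) * (b - m)^2) / (m * (1 - m))"
    by (simp add: add_divide_distrib)
  also have "al * (a - m)^2 + (1 - al) * (b - m)^2 = (m - a) * (b - m)"
    unfolding assms(7)[symmetric] by (simp add: power2_eq_square algebra_simps)
  finally show ?thesis .
qed

lemma negent0 [simp]: "negent 0 = 0" and negent1 [simp]: "negent 1 = 0"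
  by (simp_all add: negent_def)

lemma gap_zero:
  assumes "0 \<le> a" "a \<le> m" "m \<le> b" "b \<le> 1" "0 \<le> al" "al \<le> 1" "al * a + (1 - al) * b = m"
    "\<not> (0 < m \<and> m < 1)"
  shows "al * negent a + (1 - al) * negent b - negent m = 0"
proof (cases "m = 0")
  case True
  then have a0: "a = 0" using assms by simp
  have "(1 - al) * b = 0" using assms(7) True a0 by simp
  then have "al = 1 \<or> b = 0" by simp
  then show ?thesis using True a0 by auto
next
  case False
  then have m1: "m = 1" using assms by auto
  then have b1: "b = 1" using assms by simp
  have "al * (a - 1) = 0" using assms(7) m1 b1 by (simp add: algebra_simps)
  then have "al = 0 \<or> a = 1" by simp
  then show ?thesis using m1 b1 by auto
qed

lemma core:
  assumes "0 \<le> a" "a \<le> m" "m \<le> b" "0 < m"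
  shows "(m - a) * (b - m) \<le> 4 * m * (sqrt b - sqrt a)^2"
proof -
  define s where "s = sqrt a"
  define t where "t = sqrt m"
  define u where "u = sqrt b"
  have s0: "0 \<le> s" and st: "s \<le> t" and tu: "t \<le> u" and t0: "0 < t"
    using assms by (auto simp: s_def t_def u_def)
  have a: "a = s^2" and m: "m = t^2" and b: "b = u^2"
    using assms by (auto simp: s_def t_def u_def)
  have "(t^2 - s^2) * (u^2 - t^2) \<le> 4 * t^2 * (u - s)^2"
  proof (cases "u \<ge> 2 * t")
    case True
    have 1: "t^2 - s^2 \<le> t^2" using s0 by simp
    have 2: "u^2 - t^2 \<le> 4 * (u - s)^2"
    proof -
      have "2 * s \<le> u" using True st by linarith
      then have "u \<le> 2 * (u - s)" by (simp add: algebra_simps)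
      then have "u^2 \<le> (2 * (u - s))^2" using tu t0 by (intro power_mono) auto
      moreover have "(2 * (u - s))^2 = 4 * (u - s)^2" by (simp add: power2_eq_square algebra_simps)
      moreover have "0 \<le> t^2" by simp
      ultimately show ?thesis by linarith
    qed
    have 3: "0 \<le> t^2 - s^2" using s0 st by (simp add: power_mono)
    have 4: "0 \<le> u^2 - t^2" using t0 tu by (simp add: power_mono)
    have "(t^2 - s^2) * (u^2 - t^2) \<le> t^2 * (4 * (u - s)^2)"
      using 1 2 3 4 by (intro mult_mono) auto
    then show ?thesis by simp
  next
    case False
    have e: "(t^2 - s^2) * (u^2 - t^2) = ((t - s) * (u - t)) * ((t + s) * (u + t))"
      by (simp add: power2_eq_square algebra_simps)
    have 1: "(t - s) * (u - t) \<le> (u - s)^2 / 4"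
    proof -
      have "0 \<le> ((t - s) - (u - t))^2" by simp
      then show ?thesis by (simp add: power2_eq_square algebra_simps)
    qed
    have 2: "(t + s) * (u + t) \<le> 6 * t^2"
    proof -
      have "(t + s) * (u + t) \<le> (2*t) * (3*t)" using False st s0 t0 tu
        by (intro mult_mono) auto
      then show ?thesis by (simp add: power2_eq_square)
    qed
    have "((t - s) * (u - t)) * ((t + s) * (u + t)) \<le> ((u - s)^2 / 4) * (6 * t^2)"
      by (rule mult_mono[OF 1 2]) (use st tu s0 t0 in auto)
    also have "\<dots> \<le> 4 * t^2 * (u - s)^2" by simp
    finally have "((t - s) * (u - t)) * ((t + s) * (u + t)) \<le> 4 * t^2 * (u - s)^2" .
    then show ?thesis unfolding e .
  qed
  moreover have "sqrt b - sqrt a = u - s" by (simp add: s_def u_def)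
  ultimately show ?thesis by (simp only: a m b)
qed

lemma chi_le_D:
  assumes "0 \<le> a" "a \<le> m" "m \<le> b" "b \<le> 1" "0 < m" "m < 1"
  shows "(m - a) * (b - m) / (m * (1 - m)) \<le> 8 * ((sqrt b - sqrt a) + (sqrt (1 - a) - sqrt (1 - b)))^2"
proof -
  define d1 where "d1 = sqrt b - sqrt a"
  define d2 where "d2 = sqrt (1 - a) - sqrt (1 - b)"
  have d1: "0 \<le> d1" using assms by (simp add: d1_def)
  have d2: "0 \<le> d2" using assms by (simp add: d2_def)
  have q1: "d1^2 \<le> (d1 + d2)^2" using d1 d2 by (intro power_mono) auto
  have q2: "d2^2 \<le> (d1 + d2)^2" using d1 d2 by (intro power_mono) auto
  show ?thesis
  proof (cases "m \<le> 1/2")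
    case True
    have c: "(m - a) * (b - m) \<le> 4 * m * d1^2" using core[of a m b] assms by (simp add: d1_def)
    have "(m - a) * (b - m) / (m * (1 - m)) \<le> 4 * m * d1^2 / (m * (1 - m))"
      using c assms by (intro divide_right_mono) auto
    also have "\<dots> = 4 * d1^2 / (1 - m)" using assms by simp
    also have "\<dots> \<le> 8 * d1^2"
    proof -
      have "4 * d1^2 * 1 \<le> 4 * d1^2 * (2 * (1 - m))" using True by (intro mult_left_mono) auto
      then have "4 * d1^2 \<le> 8 * d1^2 * (1 - m)" by (simp add: algebra_simps)
      then show ?thesis using assms by (simp add: divide_le_eq)
    qed
    finally show ?thesis using q1 unfolding d1_def d2_def by linarith
  next
    case False
    have c: "((1 - m) - (1 - b)) * ((1 - a) - (1 - m)) \<le> 4 * (1 - m) * d2^2"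
      using core[of "1 - b" "1 - m" "1 - a"] assms by (simp add: d2_def)
    have e: "(m - a) * (b - m) = ((1 - m) - (1 - b)) * ((1 - a) - (1 - m))" by (simp add: algebra_simps)
    have "(m - a) * (b - m) / (m * (1 - m)) \<le> 4 * (1 - m) * d2^2 / (m * (1 - m))"
      using c assms unfolding e by (intro divide_right_mono) auto
    also have "\<dots> = 4 * d2^2 / m" using assms by (simp add: field_simps)
    also have "\<dots> \<le> 8 * d2^2"
    proof -
      have "4 * d2^2 * 1 \<le> 4 * d2^2 * (2 * m)" using False by (intro mult_left_mono) auto
      then have "4 * d2^2 \<le> 8 * d2^2 * m" by (simp add: algebra_simps)
      then show ?thesis using assms by (simp add: divide_le_eq)
    qed
    finally show ?thesis using q2 unfolding d1_def d2_def by linarith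
  qed
qed

lemma chi_le_1:
  fixes a m b :: real
  assumes "0 \<le> a" "a \<le> m" "m \<le> b" "b \<le> 1" "0 < m" "m < 1"
  shows "(m - a) * (b - m) / (m * (1 - m)) \<le> 1"
proof -
  have "(m - a) * (b - m) \<le> m * (1 - m)" using mult_mono[of "m-a" m "b-m" "1-m"] assms by auto
  then show ?thesis using assms by (simp add: divide_le_eq)
qed

lemma tele:
  fixes f :: "nat \<Rightarrow> real"
  assumes "2 \<le> n"
  shows "(\<Sum>i\<in>{2..n-1}. f (i+1) - f (i-1)) = f n + f (n-1) - f 2 - f 1"
  using assms
proof (induction n rule: nat_induct_at_least)
  case base
  then show ?case by simp
next
  case (Suc n)
  have "{2..Suc n - 1} = insert n {2..n-1}" using Suc.hyps by auto
  then show ?case using Suc by simp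
qed

lemma kZ_sum:
  fixes f :: "nat \<Rightarrow> real"
  assumes i: "i \<in> {2..n-1}" and y: "y \<in> {1..n}"
  shows "(\<Sum>z\<in>{1..n} - {i}. kernelZ al i y z * f z) = (if y = i then al i * f (i-1) + (1 - al i) * f (i+1) else f y)"
proof (cases "y = i")
  case True
  have "\<And>z. kernelZ al i y z * f z = (if z = i - 1 then al i * f (i-1) else 0) + (if z = i + 1 then (1 - al i) * f (i+1) else 0)"
    using True i by (auto simp: kernelZ_def)
  then have "(\<Sum>z\<in>{1..n} - {i}. kernelZ al i y z * f z) = (\<Sum>z\<in>{1..n} - {i}. (if z = i - 1 then al i * f (i-1) else 0)) + (\<Sum>z\<in>{1..n} - {i}. (if z = i + 1 then (1 - al i) * f (i+1) else 0))"
    by (simp add: sum.distrib)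
  also have "\<dots> = al i * f (i-1) + (1 - al i) * f (i+1)"
  proof -
    have "i - 1 \<in> {1..n} - {i}" "i + 1 \<in> {1..n} - {i}" using i by auto
    then show ?thesis by (simp only: sum.delta finite_Diff finite_atLeastAtMost if_True)
  qed
  finally show ?thesis using True by simp
next
  case False
  have "\<And>z. kernelZ al i y z * f z = (if z = y then f y else 0)"
    using False by (auto simp: kernelZ_def)
  then have "(\<Sum>z\<in>{1..n} - {i}. kernelZ al i y z * f z) = (\<Sum>z\<in>{1..n} - {i}. (if z = y then f y else 0))"
    by simp
  also have "\<dots> = f y" using False y by (simp add: sum.delta')
  finally show ?thesis using False by simp
qed

lemma MI_eq:
  fixes J :: "nat \<Rightarrow> nat \<Rightarrow> real" and w pp :: "nat \<Rightarrow> real" and B :: "nat set"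
  assumes fin: "finite B" and w: "\<And>b. b\<in>B \<Longrightarrow> w b \<ge> 0"
    and pp: "\<And>b. b\<in>B \<Longrightarrow> 0 \<le> pp b \<and> pp b \<le> 1"
    and J: "\<And>a b. a\<in>{0,1} \<Longrightarrow> b\<in>B \<Longrightarrow> J a b = w b * kernelX pp b a"
  shows "mutual_info {0,1} B J = (\<Sum>b\<in>B. w b * negent (pp b))
           - (\<Sum>a\<in>{0,1}. (\<Sum>b\<in>B. J a b) * ln (\<Sum>b\<in>B. J a b))"
proof -
  have col: "(\<Sum>a'\<in>{0,1}. J a' b) = w b" if "b\<in>B" for b
    using J[OF _ that] by (simp add: kernelX_def algebra_simps)
  have kXnn: "0 \<le> kernelX pp b a" if "b\<in>B" for a b using pp[OF that] by (simp add: kernelX_def)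
  have trm: "(if J a b = 0 then 0 else J a b * ln (J a b / ((\<Sum>b'\<in>B. J a b') * (\<Sum>a'\<in>{0,1}. J a' b))))
     = w b * (kernelX pp b a * ln (kernelX pp b a)) - J a b * ln (\<Sum>b'\<in>B. J a b')"
    if a: "a\<in>{0,1}" and b: "b\<in>B" for a b
  proof (cases "J a b = 0")
    case True
    then have "w b * kernelX pp b a = 0" using J[OF a b] by simp
    then have "w b = 0 \<or> kernelX pp b a = 0" by simp
    then show ?thesis using True by auto
  next
    case False
    have Jab: "J a b = w b * kernelX pp b a" using J[OF a b] .
    have wpos: "w b > 0" using False Jab w[OF b] by (metis less_eq_real_def mult_zero_left)
    have kpos: "kernelX pp b a > 0" using False Jab kXnn[OF b, of a] by (metis less_eq_real_def mult_zero_right)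
    have Jpos: "J a b > 0" using wpos kpos Jab by simp
    have Rge: "J a b \<le> (\<Sum>b'\<in>B. J a b')"
      by (rule member_le_sum[OF b _ fin]) (use J[OF a] w kXnn in auto)
    have Rpos: "(\<Sum>b'\<in>B. J a b') > 0" using Jpos Rge by linarith
    have fr: "J a b / ((\<Sum>b'\<in>B. J a b') * (\<Sum>a'\<in>{0,1}. J a' b)) = kernelX pp b a / (\<Sum>b'\<in>B. J a b')"
      unfolding col[OF b] Jab using wpos by simp
    have lneq: "ln (J a b / ((\<Sum>b'\<in>B. J a b') * (\<Sum>a'\<in>{0,1}. J a' b))) = ln (kernelX pp b a) - ln (\<Sum>b'\<in>B. J a b')"
      unfolding fr using kpos Rpos by (simp add: ln_div)
    show ?thesis unfolding if_not_P[OF False] unfolding lneq unfolding Jab by (simp add: algebra_simps)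
  qed
  have "mutual_info {0,1} B J = (\<Sum>a\<in>{0,1}. \<Sum>b\<in>B. w b * (kernelX pp b a * ln (kernelX pp b a)) - J a b * ln (\<Sum>b'\<in>B. J a b'))"
    unfolding mutual_info_def by (intro sum.cong refl) (use trm in auto)
  also have "\<dots> = (\<Sum>a\<in>{0,1}. \<Sum>b\<in>B. w b * (kernelX pp b a * ln (kernelX pp b a)))
       - (\<Sum>a\<in>{0,1::nat}. (\<Sum>b\<in>B. J a b) * ln (\<Sum>b\<in>B. J a b))"
    by (simp only: sum_subtractf sum_distrib_right)
  also have "(\<Sum>a\<in>{0,1::nat}. \<Sum>b\<in>B. w b * (kernelX pp b a * ln (kernelX pp b a)))
      = (\<Sum>b\<in>B. \<Sum>a\<in>{0,1::nat}. w b * (kernelX pp b a * ln (kernelX pp b a)))"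
    by (rule sum.swap)
  also have "\<dots> = (\<Sum>b\<in>B. w b * negent (pp b))"
    by (intro sum.cong refl) (simp add: kernelX_def negent_def algebra_simps)
  finally show ?thesis .
qed

lemma diff_eq:
  fixes n :: nat and q p al :: "nat \<Rightarrow> real"
  assumes i: "i \<in> {2..n-1}"
    and q_nonneg: "\<forall>y\<in>{1..n}. q y \<ge> 0"
    and p_range: "\<forall>y\<in>{1..n}. 0 \<le> p y \<and> p y \<le> 1"
    and al_range: "0 \<le> al i" "al i \<le> 1"
    and al_eq: "al i * p (i - 1) + (1 - al i) * p (i + 1) = p i"
  shows "mutual_info {0,1} ({1..n} - {i}) (PXZ n q p al i) - mutual_info {0,1} {1..n} (PXY n q p al i)
     = q i * (al i * negent (p (i-1)) + (1 - al i) * negent (p (i+1)) - negent (p i))"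
proof -
  define S where "S = {1..n} - {i}"
  define wZ where "wZ z = (\<Sum>y\<in>{1..n}. q y * kernelZ al i y z)" for z
  have JZ: "PXZ n q p al i a b = wZ b * kernelX p b a" for a b
    by (simp add: PXZ_def PYZX_def wZ_def sum_distrib_right)
  have kZnn: "0 \<le> kernelZ al i y z" for y z using al_range by (simp add: kernelZ_def)
  have wZnn: "wZ b \<ge> 0" for b
    unfolding wZ_def using q_nonneg kZnn by (intro sum_nonneg) (simp add: mult_nonneg_nonneg)
  have yi: "i \<in> {1..n}" using i by auto
  have JY: "PXY n q p al i a y = q y * kernelX p y a" if a: "a \<in> {0,1}" and y: "y \<in> {1..n}" for a y
  proof -
    have "PXY n q p al i a y = q y * (\<Sum>z\<in>{1..n} - {i}. kernelZ al i y z * kernelX p z a)"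
      by (simp add: PXY_def PYZX_def sum_distrib_left mult.assoc)
    also have "\<dots> = q y * (if y = i then al i * kernelX p (i-1) a + (1 - al i) * kernelX p (i+1) a else kernelX p y a)"
      using kZ_sum[OF i y, of al "\<lambda>z. kernelX p z a"] by simp
    also have "\<dots> = q y * kernelX p y a"
    proof (cases "y = i")
      case True
      have "al i * kernelX p (i-1) a + (1 - al i) * kernelX p (i+1) a = kernelX p i a"
        using a al_eq by (auto simp: kernelX_def algebra_simps)
      then show ?thesis using True by simp
    qed simp
    finally show ?thesis .
  qed
  have MZ: "mutual_info {0,1} S (PXZ n q p al i) = (\<Sum>b\<in>S. wZ b * negent (p b))
           - (\<Sum>a\<in>{0,1}. (\<Sum>b\<in>S. PXZ n q p al i a b) * ln (\<Sum>b\<in>S. PXZ n q p al i a b))"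
    by (rule MI_eq) (use p_range JZ wZnn in \<open>auto simp: S_def\<close>)
  have MY: "mutual_info {0,1} {1..n} (PXY n q p al i) = (\<Sum>b\<in>{1..n}. q b * negent (p b))
           - (\<Sum>a\<in>{0,1}. (\<Sum>b\<in>{1..n}. PXY n q p al i a b) * ln (\<Sum>b\<in>{1..n}. PXY n q p al i a b))"
    by (rule MI_eq) (use p_range JY q_nonneg in auto)
  have rows: "(\<Sum>b\<in>S. PXZ n q p al i a b) = (\<Sum>b\<in>{1..n}. PXY n q p al i a b)" for a
    unfolding PXZ_def PXY_def S_def by (rule sum.swap)
  have "(\<Sum>b\<in>S. wZ b * negent (p b)) = (\<Sum>z\<in>S. \<Sum>y\<in>{1..n}. q y * (kernelZ al i y z * negent (p z)))"
    by (simp add: wZ_def sum_distrib_right mult.assoc)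
  also have "\<dots> = (\<Sum>y\<in>{1..n}. q y * (\<Sum>z\<in>S. kernelZ al i y z * negent (p z)))"
    by (subst sum.swap) (simp add: sum_distrib_left)
  also have "\<dots> = (\<Sum>y\<in>{1..n}. q y * (if y = i then al i * negent (p (i-1)) + (1 - al i) * negent (p (i+1)) else negent (p y)))"
    unfolding S_def
  proof (intro sum.cong refl)
    fix y assume "y \<in> {1..n}"
    from kZ_sum[OF i this, of al "\<lambda>z. negent (p z)"] show
      "q y * (\<Sum>z\<in>{1..n} - {i}. kernelZ al i y z * negent (p z)) = q y * (if y = i then al i * negent (p (i-1)) + (1 - al i) * negent (p (i+1)) else negent (p y))"
      by simp
  qed
  finally have A: "(\<Sum>b\<in>S. wZ b * negent (p b)) = \<dots>" .
  have B: "(\<Sum>y\<in>{1..n}. q y * (if y = i then al i * negent (p (i-1)) + (1 - al i) * negent (p (i+1)) else negent (p y)))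
      - (\<Sum>b\<in>{1..n}. q b * negent (p b))
      = (\<Sum>y\<in>{1..n}. if y = i then q i * (al i * negent (p (i-1)) + (1 - al i) * negent (p (i+1)) - negent (p i)) else 0)"
    by (simp only: sum_subtractf[symmetric]) (intro sum.cong refl, simp add: algebra_simps)
  also have "\<dots> = q i * (al i * negent (p (i-1)) + (1 - al i) * negent (p (i+1)) - negent (p i))"
    using yi by simp
  finally show ?thesis using MZ MY rows A unfolding S_def by simp
qed

lemma tangent:
  fixes D c :: real
  assumes "0 < D" "0 < c"
  shows "3 / c^2 - 2 * D / c^3 \<le> 1 / D^2"
proof -
  have "0 \<le> (c - D)^2 * (c + 2 * D)" using assms by simp
  then have h: "(3 * c - 2 * D) * D^2 \<le> c^3" by (simp add: power2_eq_square power3_eq_cube algebra_simps)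
  have "3 / c^2 - 2 * D / c^3 = (3 * c - 2 * D) / c^3" using assms by (simp add: field_simps power2_eq_square power3_eq_cube)
  also have "\<dots> \<le> 1 / D^2" using h assms by (simp add: divide_le_eq le_divide_eq field_simps)
  finally show ?thesis .
qed

lemma gap_bounds:
  fixes a m b al :: real
  assumes "0 \<le> a" "a \<le> m" "m \<le> b" "b \<le> 1" "0 \<le> al" "al \<le> 1" "al * a + (1 - al) * b = m"
  shows "al * negent a + (1 - al) * negent b - negent m \<le> 1"
    and "al * negent a + (1 - al) * negent b - negent m \<le> 8 * ((sqrt b - sqrt a) + (sqrt (1 - a) - sqrt (1 - b)))^2"
proof -
  have "al * negent a + (1 - al) * negent b - negent m \<le> 1 \<and>
        al * negent a + (1 - al) * negent b - negent m \<le> 8 * ((sqrt b - sqrt a) + (sqrt (1 - a) - sqrt (1 - b)))^2"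
  proof (cases "0 < m \<and> m < 1")
    case True
    have g: "al * negent a + (1 - al) * negent b - negent m \<le> (m - a) * (b - m) / (m * (1 - m))"
      using gap_chi[OF assms] True by blast
    have c1: "(m - a) * (b - m) / (m * (1 - m)) \<le> 1" using chi_le_1[of a m b] assms True by blast
    have c2: "(m - a) * (b - m) / (m * (1 - m)) \<le> 8 * ((sqrt b - sqrt a) + (sqrt (1 - a) - sqrt (1 - b)))^2"
      using chi_le_D[of a m b] assms True by blast
    show ?thesis using g c1 c2 by linarith
  next
    case False
    then show ?thesis using gap_zero[OF assms False] by simp
  qed
  then show "al * negent a + (1 - al) * negent b - negent m \<le> 1"
    and "al * negent a + (1 - al) * negent b - negent m \<le> 8 * ((sqrt b - sqrt a) + (sqrt (1 - a) - sqrt (1 - b)))^2"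
    by auto
qed

lemma poly_small: "3 \<le> n \<Longrightarrow> n \<le> 14 \<Longrightarrow> (n::nat)^3 \<le> 256 * (n - 2)"
proof -
  assume "3 \<le> n" "n \<le> 14"
  then have "n \<in> {3,4,5,6,7,8,9,10,11,12,13,14}" by simp presburger
  moreover have "\<forall>k\<in>{3,4,5,6,7,8,9,10,11,12,13,14::nat}. k^3 \<le> 256 * (k - 2)" by simp
  ultimately show ?thesis by blast
qed

lemma poly_large:
  assumes "(15::real) \<le> x" shows "x^3 \<le> 2 * (x - 2)^3"
proof -
  have "0 \<le> x^2 * (x - 12)" using assms by simp
  moreover have "2 * (x - 2)^3 - x^3 = x^2 * (x - 12) + (24 * x - 16)"
    by (simp add: power2_eq_square power3_eq_cube algebra_simps)
  ultimately show ?thesis using assms by linarith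
qed

theorem theorem4:
  fixes n :: nat and q p \<alpha> :: "nat \<Rightarrow> real"
  assumes n3: "n \<ge> 3"
    and q_nonneg: "\<forall>y\<in>{1..n}. q y \<ge> 0"
    and q_sum: "(\<Sum>y\<in>{1..n}. q y) = 1"
    and p_range: "\<forall>y\<in>{1..n}. 0 \<le> p y \<and> p y \<le> 1"
    and p_mono: "\<forall>y z. 1 \<le> y \<longrightarrow> y \<le> z \<longrightarrow> z \<le> n \<longrightarrow> p y \<le> p z"
    and \<alpha>_range: "\<forall>i\<in>{2..n-1}. 0 \<le> \<alpha> i \<and> \<alpha> i \<le> 1"
    and \<alpha>_eq: "\<forall>i\<in>{2..n-1}. \<alpha> i * p (i - 1) + (1 - \<alpha> i) * p (i + 1) = p i"
  shows "\<exists>i\<in>{2..n-1}.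
           mutual_info {0,1} ({1..n} - {i}) (PXZ n q p \<alpha> i)
           - mutual_info {0,1} {1..n} (PXY n q p \<alpha> i)
           \<le> 256 / real n ^ 3"
proof (rule ccontr)
  assume H: "\<not> ?thesis"
  define T where "T = 256 / real n ^ 3"
  define I where "I = {2..n-1}"
  define gap where "gap i = \<alpha> i * negent (p (i-1)) + (1 - \<alpha> i) * negent (p (i+1)) - negent (p i)" for i
  define f where "f j = sqrt (p j) - sqrt (1 - p j)" for j
  define D where "D i = f (i+1) - f (i-1)" for i
  define N where "N = real n - 2"
  have T0: "T > 0" using n3 by (simp add: T_def)
  have big: "q i * gap i > T" if i: "i \<in> I" for i
  proof -
    have "mutual_info {0,1} ({1..n} - {i}) (PXZ n q p \<alpha> i) - mutual_info {0,1} {1..n} (PXY n q p \<alpha> i)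
       = q i * gap i"
      unfolding gap_def
      by (rule diff_eq) (use i \<alpha>_range \<alpha>_eq q_nonneg p_range in \<open>auto simp: I_def\<close>)
    moreover have "\<not> (mutual_info {0,1} ({1..n} - {i}) (PXZ n q p \<alpha> i) - mutual_info {0,1} {1..n} (PXY n q p \<alpha> i) \<le> T)"
      using H i unfolding I_def T_def by blast
    ultimately show ?thesis by linarith
  qed
  have facts: "0 \<le> p (i-1) \<and> p (i-1) \<le> p i \<and> p i \<le> p (i+1) \<and> p (i+1) \<le> 1 \<and> 0 \<le> \<alpha> i \<and> \<alpha> i \<le> 1
      \<and> \<alpha> i * p (i-1) + (1 - \<alpha> i) * p (i+1) = p i" if i: "i \<in> I" for i
  proof -
    have r: "2 \<le> i" "i + 1 \<le> n" using i n3 by (auto simp: I_def)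
    have m1: "i - 1 \<in> {1..n}" "i + 1 \<in> {1..n}" using r by auto
    have "0 \<le> p (i-1)" "p (i+1) \<le> 1" using p_range m1 by auto
    moreover have "p (i-1) \<le> p i"
    proof -
      have "1 \<le> i - 1" "i - 1 \<le> i" "i \<le> n" using r by auto
      then show ?thesis using p_mono by blast
    qed
    moreover have "p i \<le> p (i+1)" using p_mono r by auto
    moreover have "0 \<le> \<alpha> i \<and> \<alpha> i \<le> 1" "\<alpha> i * p (i-1) + (1 - \<alpha> i) * p (i+1) = p i"
      using \<alpha>_range \<alpha>_eq i by (auto simp: I_def)
    ultimately show ?thesis by auto
  qed
  have Deq: "D i = (sqrt (p (i+1)) - sqrt (p (i-1))) + (sqrt (1 - p (i-1)) - sqrt (1 - p (i+1)))" for i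
    by (simp add: D_def f_def)
  have gap1: "gap i \<le> 1" if "i \<in> I" for i
    using gap_bounds(1)[of "p (i-1)" "p i" "p (i+1)" "\<alpha> i"] facts[OF that] by (simp add: gap_def)
  have gapD: "gap i \<le> 8 * (D i)^2" if "i \<in> I" for i
    using gap_bounds(2)[of "p (i-1)" "p i" "p (i+1)" "\<alpha> i"] facts[OF that] unfolding gap_def Deq by simp
  have q0: "0 \<le> q i" if "i \<in> I" for i using q_nonneg that n3 by (auto simp: I_def)
  have finI: "finite I" by (simp add: I_def)
  have Ine: "I \<noteq> {}" using n3 by (auto simp: I_def)
  have cardI: "real (card I) = N" using n3 by (simp add: I_def N_def of_nat_diff)
  have sumq: "(\<Sum>i\<in>I. q i) \<le> 1"
  proof -
    have "(\<Sum>i\<in>I. q i) \<le> (\<Sum>i\<in>{1..n}. q i)"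
      by (rule sum_mono2) (use q_nonneg in \<open>auto simp: I_def\<close>)
    then show ?thesis using q_sum by simp
  qed
  have fb: "-1 \<le> f j \<and> f j \<le> 1" if "j \<in> {1..n}" for j
  proof -
    have "0 \<le> p j" "p j \<le> 1" using p_range that by auto
    then have "sqrt (p j) \<le> 1" "sqrt (1 - p j) \<le> 1" "0 \<le> sqrt (p j)" "0 \<le> sqrt (1 - p j)" by auto
    then show ?thesis unfolding f_def by linarith
  qed
  have sumD: "(\<Sum>i\<in>I. D i) \<le> 4"
  proof -
    have "(\<Sum>i\<in>I. D i) = f n + f (n-1) - f 2 - f 1"
      unfolding I_def D_def by (rule tele) (use n3 in simp)
    moreover have "f n \<le> 1" "f (n-1) \<le> 1" "-1 \<le> f 2" "-1 \<le> f 1" using fb n3 by auto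
    ultimately show ?thesis by linarith
  qed
  show False
  proof (cases "n \<le> 14")
    case True
    have "(\<Sum>i\<in>I. T) < (\<Sum>i\<in>I. q i)"
    proof (rule sum_strict_mono[OF finI Ine])
      fix i assume i: "i \<in> I"
      have "q i * gap i \<le> q i * 1" using gap1[OF i] q0[OF i] by (intro mult_left_mono) auto
      then show "T < q i" using big[OF i] by simp
    qed
    then have "N * T < 1" using sumq cardI by simp
    then have "(real n - 2) * 256 < real n ^ 3" using n3 by (simp add: N_def T_def field_simps)
    moreover have "n^3 \<le> 256 * (n - 2)" using poly_small n3 True by blast
    then have "real (n^3) \<le> real (256 * (n - 2))" by (simp only: of_nat_le_iff)
    then have "real n ^ 3 \<le> 256 * (real n - 2)" using n3 by (simp add: of_nat_diff)
    ultimately show False by linarith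
  next
    case False
    define c where "c = 4 / N"
    have N0: "N > 0" using n3 by (simp add: N_def)
    have c0: "c > 0" using N0 by (simp add: c_def)
    have low: "T / 8 * (3 / c^2 - 2 * D i / c^3) < q i" if i: "i \<in> I" for i
    proof -
      have "q i * gap i \<le> q i * (8 * (D i)^2)" using gapD[OF i] q0[OF i] by (intro mult_left_mono) auto
      then have qd: "T < q i * (8 * (D i)^2)" using big[OF i] by simp
      have Dpos: "D i > 0"
      proof -
        have "0 \<le> D i" unfolding Deq using facts[OF i] by (simp add: real_sqrt_le_mono)
        moreover have "D i \<noteq> 0" using qd T0 by auto
        ultimately show ?thesis by simp
      qed
      have "T / (8 * (D i)^2) < q i" using qd Dpos by (simp add: divide_less_eq mult.commute)
      moreover have "T / 8 * (3 / c^2 - 2 * D i / c^3) \<le> T / 8 * (1 / (D i)^2)"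
        using tangent[OF Dpos c0] T0 by (intro mult_left_mono) auto
      moreover have "T / 8 * (1 / (D i)^2) = T / (8 * (D i)^2)" by simp
      ultimately show ?thesis by linarith
    qed
    have "(\<Sum>i\<in>I. T / 8 * (3 / c^2 - 2 * D i / c^3)) < (\<Sum>i\<in>I. q i)"
      by (rule sum_strict_mono[OF finI Ine]) (rule low)
    moreover have "(\<Sum>i\<in>I. T / 8 * (3 / c^2 - 2 * D i / c^3)) = T / 8 * (3 / c^2 * N - 2 / c^3 * (\<Sum>i\<in>I. D i))"
      using cardI by (simp add: sum_distrib_left[symmetric] sum_subtractf sum_divide_distrib[symmetric] algebra_simps)
    moreover have "T / 8 * (3 / c^2 * N - 2 / c^3 * 4) \<le> T / 8 * (3 / c^2 * N - 2 / c^3 * (\<Sum>i\<in>I. D i))"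
    proof (rule mult_left_mono)
      have "2 / c^3 * (\<Sum>i\<in>I. D i) \<le> 2 / c^3 * 4" using sumD c0 by (intro mult_left_mono) auto
      then show "3 / c^2 * N - 2 / c^3 * 4 \<le> 3 / c^2 * N - 2 / c^3 * (\<Sum>i\<in>I. D i)" by linarith
      show "0 \<le> T / 8" using T0 by linarith
    qed
    moreover have "T / 8 * (3 / c^2 * N - 2 / c^3 * 4) = T * N^3 / 128"
      using N0 by (simp add: c_def field_simps power2_eq_square power3_eq_cube)
    ultimately have "T * N^3 / 128 < 1" using sumq by linarith
    then have "2 * N^3 < real n ^ 3" using n3 by (simp add: T_def field_simps)
    moreover have "real n ^ 3 \<le> 2 * N^3" unfolding N_def using False by (intro poly_large) simp
    ultimately show False by linarith
  qed
qed

end
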